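(* Let $m\ge 2$ and $1\le k\le 2^m$ be integers, and let $\mathcal B$ be a nonempty set of $k$-element subsets of $\mathrm{PG}(1,2^m)$ that is invariant under the action of $\mathrm{PGL}_2(\mathrm{GF}(2^m))$ (i.e. $\pi(B)\in\mathcal B$ for all $B\in\mathcal B$ and all $\pi\in \mathrm{PGL}_2(\mathrm{GF}(2^m))$). Let $\mathbb D=(\mathrm{PG}(1,2^m),\mathcal B)$. Then the $2$-rank of $\mathbb D$ is $2^m$ if $k$ is even and $2^m+1$ if $k$ is odd.
   Context: $\mathrm{PGL}_2(\mathrm{GF}(2^m))$ acts on $\mathrm{PG}(1,2^m)=\mathrm{GF}(2^m)\cup\{\infty\}$ by linear fractional transformations. The $2$-rank of an incidence structure $(X,\mathcal B)$ is the rank over $\mathrm{GF}(2)$ of its $|\mathcal B|\times|X|$ $(0,1)$-incidence matrix (entry $1$ iff the point lies in the block). *)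

theory Defs
  imports Main "HOL.Vector_Spaces" "HOL-Library.Z2" "HOL-Library.Function_Algebras"
begin

text \<open>The projective line PG(1,q) over a finite field 'a is modelled as 'a option,
  with None playing the role of the point at infinity.\<close>

definition lft :: "'a::field \<Rightarrow> 'a \<Rightarrow> 'a \<Rightarrow> 'a \<Rightarrow> 'a option \<Rightarrow> 'a option" where
  "lft a b c d p = (case p of
      None \<Rightarrow> (if c = 0 then None else Some (a / c))
    | Some x \<Rightarrow> (if c * x + d = 0 then None else Some ((a * x + b) / (c * x + d))))"

definition PGL2 :: "('a::field option \<Rightarrow> 'a option) set" where
  "PGL2 = {lft a b c d | a b c d. a * d - b * c \<noteq> 0}"

definition scaleF :: "bit \<Rightarrow> ('p \<Rightarrow> bit) \<Rightarrow> ('p \<Rightarrow> bit)" where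
  "scaleF c f = (\<lambda>x. c * f x)"

lemma vector_space_scaleF: "vector_space scaleF"
  by unfold_locales (auto simp: scaleF_def fun_eq_iff algebra_simps)

definition incvec :: "'p set \<Rightarrow> ('p \<Rightarrow> bit)" where
  "incvec B = (\<lambda>x. if x \<in> B then 1 else 0)"

text \<open>2-rank of the incidence structure (UNIV, Bs): the GF(2)-rank of the incidence
  matrix, i.e. the dimension of the span of its rows.\<close>
definition two_rank :: "'p set set \<Rightarrow> nat" where
  "two_rank Bs = vector_space.dim scaleF (incvec ` Bs)"

end

theory Submission
  imports Defs
begin
interpretation vs: vector_space scaleF by (rule vector_space_scaleF)

lemma lft_None: "lft a b c d None = (if c = 0 then None else Some (a / c))"
  by (simp add: lft_def)
lemma lft_Some: "lft a b c d (Some x) = (if c * x + d = 0 then None else Some ((a * x + b) / (c * x + d)))"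
  by (simp add: lft_def)

lemma lft_inj:
  fixes a b c d :: "'a::field"
  assumes det: "a * d - b * c \<noteq> 0" shows "inj (lft a b c d)"
proof (rule injI)
  fix p q assume eq: "lft a b c d p = lft a b c d q"
  have k1: "x = y" if "c*x+d \<noteq> 0" "c*y+d \<noteq> 0" "(a*x+b)/(c*x+d) = (a*y+b)/(c*y+d)" for x y
  proof -
    have "(a*x+b)*(c*y+d) = (a*y+b)*(c*x+d)" using that by (simp add: field_simps)
    then have "(a*d-b*c)*(x-y) = 0" by (simp add: algebra_simps)
    then show ?thesis using det by simp
  qed
  have k2: False if "c \<noteq> 0" "c*x+d \<noteq> 0" "a/c = (a*x+b)/(c*x+d)" for x
  proof -
    have "a*(c*x+d) = (a*x+b)*c" using that by (simp add: field_simps)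
    then have "a*d-b*c = 0" by (simp add: algebra_simps)
    then show False using det by simp
  qed
  have k3: False if "c = 0" "c*x+d = 0" for x
    using that det by simp
  have k4: "x = y" if "c*x+d = 0" "c*y+d = 0" for x y
  proof (cases "c = 0")
    case True then show ?thesis using k3 that by blast
  next
    case False
    then show ?thesis using that by (metis add_right_cancel mult_left_cancel)
  qed
  show "p = q"
  proof (cases p)
    case None
    show ?thesis
    proof (cases q)
      case (Some y)
      then show ?thesis using eq None k2[of y] k3[of y]
        by (cases "c = 0"; cases "c*y+d = 0") (auto simp: lft_None lft_Some)
    qed (simp add: None)
  next
    case (Some x)
    show ?thesis
    proof (cases q)
      case None
      then show ?thesis using eq Some k2[of x] k3[of x]
        by (cases "c = 0"; cases "c*x+d = 0") (auto simp: lft_None lft_Some)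
    next
      case (Some y)
      then show ?thesis using eq \<open>p = Some x\<close> k1[of x y] k4[of x y]
        by (cases "c*x+d = 0"; cases "c*y+d = 0") (auto simp: lft_None lft_Some)
    qed
  qed
qed

lemma PGL2I: "a * d - b * c \<noteq> 0 \<Longrightarrow> lft a b c d \<in> PGL2"
  unfolding PGL2_def by blast

lemma PGL2_inj: "g \<in> PGL2 \<Longrightarrow> inj g"
  unfolding PGL2_def using lft_inj by blast

definition mu :: "'a::field \<Rightarrow> 'a option \<Rightarrow> 'a option" where
  "mu a = lft a 0 0 1"

lemma mu_PGL2: "a \<noteq> 0 \<Longrightarrow> mu a \<in> PGL2"
  unfolding mu_def by (rule PGL2I) simp

lemma mu_None[simp]: "mu a None = None"
  by (simp add: mu_def lft_None)

lemma mu_Some[simp]: "mu a (Some y) = Some (a * y)"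
  by (simp add: mu_def lft_Some)

lemma to_pts:
  fixes p q :: "'a::field option"
  assumes "p \<noteq> q" shows "\<exists>g\<in>PGL2. g (Some 0) = p \<and> g None = q"
proof (cases p)
  case None
  then obtain v where q: "q = Some v" using assms by (cases q) auto
  show ?thesis
    by (rule bexI[of _ "lft v 1 1 0"]) (auto simp: None q lft_None lft_Some intro: PGL2I)
next
  case (Some u)
  show ?thesis
  proof (cases q)
    case None
    show ?thesis
      by (rule bexI[of _ "lft 1 u 0 1"]) (auto simp: None Some lft_None lft_Some intro: PGL2I)
  next
    case (Some v)
    have "v - u \<noteq> 0" using assms Some \<open>p = Some u\<close> by auto
    then show ?thesis
      by (intro bexI[of _ "lft v u 1 1"]) (auto simp: Some \<open>p = Some u\<close> lft_None lft_Some intro: PGL2I)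
  qed
qed

lemma from_pts:
  fixes p q :: "'a::field option"
  assumes "p \<noteq> q" shows "\<exists>g\<in>PGL2. g p = Some 0 \<and> g q = None"
proof (cases p)
  case None
  then obtain v where q: "q = Some v" using assms by (cases q) auto
  show ?thesis
    by (rule bexI[of _ "lft 0 1 1 (-v)"]) (auto simp: None q lft_None lft_Some intro: PGL2I)
next
  case (Some u)
  show ?thesis
  proof (cases q)
    case None
    show ?thesis
      by (rule bexI[of _ "lft 1 (-u) 0 1"]) (auto simp: None Some lft_None lft_Some intro: PGL2I)
  next
    case (Some v)
    have "u - v \<noteq> 0" using assms Some \<open>p = Some u\<close> by auto
    then show ?thesis
      by (intro bexI[of _ "lft 1 (-u) 1 (-v)"]) (auto simp: Some \<open>p = Some u\<close> lft_None lft_Some intro: PGL2I)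
  qed
qed

lemma sum_fun_apply: "(\<Sum>i\<in>A. f i) x = (\<Sum>i\<in>A. f i x)"
  by (induct A rule: infinite_finite_induct) auto

lemma of_nat_bit: "(of_nat n :: bit) = (if even n then 0 else 1)"
  by (induct n) auto

lemma bit_add_self[simp]: "(z::bit) + z = 0"
  by (cases z) auto

lemma fun_add_self: "(f :: 'p \<Rightarrow> bit) + f = 0"
  by (rule ext) simp

lemma fun_add_cancel: "((a::'p \<Rightarrow> bit) + b) + a = b"
proof (rule ext)
  fix x show "((a + b) + a) x = b x" by (cases "a x"; cases "b x") simp_all
qed

lemma incvec_image: "inj g \<Longrightarrow> incvec (g ` S) (g x) = incvec S x"
  by (simp add: incvec_def inj_image_mem_iff)

lemma sum_ind_bit: "finite A \<Longrightarrow> (\<Sum>a\<in>A. (if P a then 1 else 0 :: bit)) = of_nat (card {a\<in>A. P a})"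
  by (simp add: sum.If_cases Int_def)

definition W :: "'a::field option set \<Rightarrow> 'a option \<Rightarrow> bit" where
  "W B = (\<Sum>a\<in>{a. a \<noteq> 0}. incvec (mu a ` B))"

lemma card_nz_odd:
  assumes "even (card (UNIV :: 'a::{field,finite} set))"
  shows "odd (card {a::'a. a \<noteq> 0})"
proof -
  have "card {a::'a. a \<noteq> 0} = card (UNIV :: 'a set) - 1"
  proof -
    have "{a::'a. a \<noteq> 0} = UNIV - {0}" by auto
    then show ?thesis by (simp add: card_Diff_singleton)
  qed
  moreover have "card (UNIV :: 'a set) \<ge> 1" by (simp add: Suc_leI finite_UNIV_card_ge_0)
  ultimately show ?thesis using assms by auto
qed

lemma W_const:
  fixes B :: "'a::{field,finite} option set"
  assumes ev: "even (card (UNIV :: 'a set))" and x: "x = None \<or> x = Some 0"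
  shows "W B x = incvec B x"
proof -
  have "mu a x \<in> mu a ` B \<longleftrightarrow> x \<in> B" if "a \<noteq> 0" for a
    by (rule inj_image_mem_iff[OF PGL2_inj[OF mu_PGL2[OF that]]])
  moreover have "mu a x = x" for a using x by auto
  ultimately have h: "incvec (mu a ` B) x = incvec B x" if "a \<noteq> 0" for a
    using that by (simp add: incvec_def)
  have "W B x = (\<Sum>a\<in>{a::'a. a \<noteq> 0}. incvec B x)"
    unfolding W_def sum_fun_apply by (rule sum.cong) (auto simp: h)
  also have "\<dots> = of_nat (card {a::'a. a \<noteq> 0}) * incvec B x" by simp
  also have "\<dots> = incvec B x" using card_nz_odd[OF ev] by (simp add: of_nat_bit)
  finally show ?thesis .
qed

lemma W_gen:
  fixes B :: "'a::{field,finite} option set"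
  assumes x: "x \<noteq> 0"
  shows "W B (Some x) = of_nat (card {y. y \<noteq> 0 \<and> Some y \<in> B})"
proof -
  have h: "Some x \<in> mu a ` B \<longleftrightarrow> Some (x / a) \<in> B" if "a \<noteq> 0" for a
  proof -
    have "Some x = mu a (Some (x / a))" using that by simp
    then show ?thesis
      using inj_image_mem_iff[OF PGL2_inj[OF mu_PGL2[OF that]]] by metis
  qed
  have "W B (Some x) = (\<Sum>a\<in>{a. a \<noteq> 0}. if Some (x / a) \<in> B then 1 else 0)"
    unfolding W_def sum_fun_apply incvec_def by (rule sum.cong) (auto simp: h)
  also have "\<dots> = of_nat (card {a \<in> {a. a \<noteq> 0}. Some (x / a) \<in> B})"
    by (rule sum_ind_bit) simp
  also have "card {a \<in> {a. a \<noteq> 0}. Some (x / a) \<in> B} = card {y. y \<noteq> 0 \<and> Some y \<in> B}"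
  proof (rule bij_betw_same_card[of "\<lambda>a. x / a"])
    show "bij_betw (\<lambda>a. x / a) {a \<in> {a. a \<noteq> 0}. Some (x / a) \<in> B} {y. y \<noteq> 0 \<and> Some y \<in> B}"
    proof (rule bij_betw_byWitness[of _ "\<lambda>a. x / a"])
    qed (use x in auto)
  qed
  finally show ?thesis .
qed

lemma decomp:
  fixes B :: "'b option set"
  assumes fin: "finite B"
  shows "incvec B = (\<Sum>p\<in>B - {None}. incvec {p} + incvec {None}) + scaleF (of_nat (card B)) (incvec {None})"
proof (rule ext)
  fix x :: "'b option"
  show "incvec B x = ((\<Sum>p\<in>B - {None}. incvec {p} + incvec {None}) + scaleF (of_nat (card B)) (incvec {None})) x"
  proof (cases x)
    case None
    have s: "(\<Sum>p\<in>B - {None}. (incvec {p} + incvec {None}) None) = (\<Sum>p\<in>B - {None}. (1::bit))"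
      by (rule sum.cong) (auto simp: incvec_def)
    have c: "card B = card (B - {None}) + (if None \<in> B then 1 else 0)"
    proof (cases "None \<in> B")
      case True then show ?thesis using card_Suc_Diff1[OF fin True] by simp
    qed simp
    have r: "((\<Sum>p\<in>B - {None}. incvec {p} + incvec {None}) + scaleF (of_nat (card B)) (incvec {None})) None
       = of_nat (card (B - {None})) + of_nat (card B)"
      unfolding plus_fun_apply[of "sum _ _"] sum_fun_apply s scaleF_def by (simp add: incvec_def)
    have e: "(of_nat n :: bit) + of_nat n = 0" for n by (simp add: of_nat_bit)
    have o: "(of_nat n :: bit) + of_nat (n + 1) = 1" for n by (simp add: of_nat_bit)
    show ?thesis
      unfolding None r
      by (cases "None \<in> B") (simp_all only: c if_True if_False add_0_right e o, simp_all add: incvec_def)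
  next
    case (Some y)
    have s: "(\<Sum>p\<in>B - {None}. (incvec {p} + incvec {None}) x) = (\<Sum>p\<in>B - {None}. if x = p then 1 else 0)"
      by (rule sum.cong) (auto simp: incvec_def Some)
    show ?thesis
      unfolding plus_fun_apply[of "sum _ _"] sum_fun_apply s scaleF_def
      using fin by (simp add: sum.delta' incvec_def Some)
  qed
qed

lemma indep_S1:
  "vs.independent (range (\<lambda>y::'b::finite. incvec {Some y} + incvec {None}) \<union> {incvec {None}})"
  (is "vs.independent (range ?u \<union> {?eN})")
proof -
  have fin: "finite (range ?u \<union> {?eN})" by simp
  have uval: "?u y (Some z) = (if y = z then 1 else 0)" for y z by (simp add: incvec_def)
  have eNval: "?eN (Some z) = 0" for z by (simp add: incvec_def)
  have Nval: "v None = 1" if "v \<in> range ?u \<union> {?eN}" for v using that by (auto simp: incvec_def)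
  have neq: "?eN \<notin> range ?u"
  proof
    assume "?eN \<in> range ?u"
    then obtain y where "?eN = ?u y" by auto
    then have "?eN (Some y) = ?u y (Some y)" by simp
    then show False by (simp add: incvec_def)
  qed
  have uinj: "?u y' = ?u y \<longleftrightarrow> y' = y" for y y'
  proof
    assume "?u y' = ?u y"
    then have "?u y' (Some y') = ?u y (Some y')" by simp
    then show "y' = y" by (simp add: incvec_def split: if_splits)
  qed simp
  have vS: "v (Some y) = (if v = ?u y then 1 else 0)" if vin: "v \<in> range ?u \<union> {?eN}" for v y
  proof (cases "v = ?eN")
    case True then show ?thesis using neq by (auto simp: eNval)
  next
    case False
    then obtain y' where "v = ?u y'" using vin by auto
    then show ?thesis using uinj[of y' y] by (simp add: incvec_def)
  qed
  show ?thesis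
    unfolding vs.independent_explicit_finite_subsets
  proof (intro allI impI ballI)
    fix T c v
    assume T: "T \<subseteq> range ?u \<union> {?eN}" and finT: "finite T"
    assume z: "(\<Sum>v\<in>T. scaleF (c v) v) = 0"
    have cu: "c (?u y) = 0" if "?u y \<in> T" for y
    proof -
      have "0 = (\<Sum>v\<in>T. scaleF (c v) v) (Some y)" using z by simp
      also have "\<dots> = (\<Sum>v\<in>T. if v = ?u y then c v else 0)"
        unfolding sum_fun_apply scaleF_def
      proof (rule sum.cong)
        fix v assume "v \<in> T"
        then have "v (Some y) = (if v = ?u y then 1 else 0)" using vS T by blast
        then show "(\<lambda>x. c v * v x) (Some y) = (if v = ?u y then c v else 0)" by simp
      qed simp
      also have "\<dots> = c (?u y)" using finT that by (simp add: sum.delta')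
      finally show ?thesis by simp
    qed
    have cN: "c ?eN = 0" if "?eN \<in> T"
    proof -
      have "0 = (\<Sum>v\<in>T. scaleF (c v) v) None" using z by simp
      also have "\<dots> = (\<Sum>v\<in>T. if v = ?eN then c v else 0)"
        unfolding sum_fun_apply scaleF_def
      proof (rule sum.cong)
        fix v assume v: "v \<in> T"
        then have "v None = 1" using Nval T by blast
        moreover have "v \<noteq> ?eN \<Longrightarrow> c v = 0" using v T cu by auto
        ultimately show "(\<lambda>x. c v * v x) None = (if v = ?eN then c v else 0)" by simp
      qed simp
      also have "\<dots> = c ?eN" using finT that by (simp add: sum.delta')
      finally show ?thesis by simp
    qed
    assume "v \<in> T"
    then show "c v = 0" using cu cN T by auto
  qed
qed

lemma card_UNIV_option': "card (UNIV :: 'b::finite option set) = Suc (card (UNIV :: 'b set))"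
proof -
  have "card (insert None (range (Some :: 'b \<Rightarrow> _))) = Suc (card (UNIV :: 'b set))"
    by (simp add: card_image)
  then show ?thesis by (simp only: UNIV_option_conv)
qed

lemma cnt:
  fixes B :: "'a::field option set"
  assumes fin: "finite B" and z: "z \<in> B" and z': "z' \<notin> B" and zz: "{z, z'} = {None, Some 0}"
  shows "card {y. y \<noteq> 0 \<and> Some y \<in> B} = card B - 1"
proof -
  have "B - {z} = Some ` {y. y \<noteq> 0 \<and> Some y \<in> B}"
  proof (rule set_eqI)
    fix w show "w \<in> B - {z} \<longleftrightarrow> w \<in> Some ` {y. y \<noteq> 0 \<and> Some y \<in> B}"
      using z z' zz by (cases w) (auto simp: doubleton_eq_iff)
  qed
  then have "card (B - {z}) = card {y. y \<noteq> 0 \<and> Some y \<in> B}" by (simp add: card_image)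
  then show ?thesis using card_Diff_singleton[OF z] by simp
qed

lemma pair:
  fixes Bs :: "'a::{field,finite} option set set"
  assumes ev: "even (card (UNIV::'a set))"
    and ne: "Bs \<noteq> {}" and cardk: "\<forall>B\<in>Bs. card B = k" and k1: "1 \<le> k"
    and kq: "k \<le> card (UNIV::'a set)"
    and inv: "\<forall>\<pi>\<in>PGL2. \<forall>B\<in>Bs. \<pi> ` B \<in> Bs"
    and pq: "p \<noteq> q"
  shows "incvec {p} + incvec {q} \<in> vs.span (incvec ` Bs)"
proof -
  obtain B where B: "B \<in> Bs" using ne by auto
  have cB: "card B = k" using B cardk by auto
  then obtain b where b: "b \<in> B" using k1 by (metis card.empty ex_in_conv not_one_le_zero)
  have "B \<noteq> UNIV" using cB kq card_UNIV_option'[where 'b='a] by auto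
  then obtain c where c: "c \<notin> B" by auto
  have bc: "b \<noteq> c" using b c by auto
  obtain h1 where h1: "h1 \<in> PGL2" "h1 b = Some 0" "h1 c = None" using from_pts[OF bc] by auto
  obtain h2 where h2: "h2 \<in> PGL2" "h2 c = Some 0" "h2 b = None" using from_pts[OF bc[symmetric]] by auto
  define B1 where "B1 = h1 ` B"
  define B2 where "B2 = h2 ` B"
  have B1: "B1 \<in> Bs" "card B1 = k" using inv h1 B cardk unfolding B1_def by auto
  have B2: "B2 \<in> Bs" "card B2 = k" using inv h2 B cardk unfolding B2_def by auto
  have i1: "inj h1" "inj h2" using h1 h2 PGL2_inj by auto
  have m1: "Some 0 \<in> B1" "None \<notin> B1" unfolding B1_def
    using b c h1 inj_image_mem_iff[OF i1(1)] by (metis imageI, metis)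
  have m2: "None \<in> B2" "Some 0 \<notin> B2" unfolding B2_def
    using b c h2 inj_image_mem_iff[OF i1(2)] by (metis imageI, metis)
  have c1: "card {y. y \<noteq> 0 \<and> Some y \<in> B1} = k - 1"
    using cnt[of B1 "Some 0" None] m1 B1 by auto
  have c2: "card {y. y \<noteq> 0 \<and> Some y \<in> B2} = k - 1"
    using cnt[of B2 None "Some 0"] m2 B2 by auto
  obtain g where g: "g \<in> PGL2" "g (Some 0) = p" "g None = q" using to_pts[OF pq] by auto
  have ig: "inj g" using g PGL2_inj by auto
  have sg: "surj g" by (rule finite_UNIV_inj_surj[OF _ ig]) simp
  define F where "F = (\<Sum>a\<in>{a::'a. a \<noteq> 0}. incvec (g ` mu a ` B1)) + (\<Sum>a\<in>{a::'a. a \<noteq> 0}. incvec (g ` mu a ` B2))"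
  have mem: "g ` mu a ` Bi \<in> Bs" if "a \<noteq> 0" "Bi \<in> Bs" for a Bi
    using inv g(1) mu_PGL2[OF that(1)] that(2) by blast
  have "F \<in> vs.span (incvec ` Bs)"
    unfolding F_def
    by (intro vs.span_add vs.span_sum vs.span_base imageI mem B1(1) B2(1)) auto
  moreover have "F = incvec {p} + incvec {q}"
  proof (rule ext)
    fix y
    obtain x where y: "y = g x" using sg by (metis surjD)
    have "F (g x) = W B1 x + W B2 x"
      unfolding F_def W_def plus_fun_apply sum_fun_apply incvec_image[OF ig] ..
    moreover have "(incvec {p} + incvec {q}) (g x) = incvec {Some 0} x + incvec {None} x"
      using incvec_image[OF ig, of "{Some 0}" x] incvec_image[OF ig, of "{None}" x] g by simp
    moreover have "W B1 x + W B2 x = incvec {Some 0} x + incvec {None} x"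
    proof (cases "x = None \<or> x = Some 0")
      case True
      then show ?thesis using W_const[OF ev True, of B1] W_const[OF ev True, of B2] m1 m2
        by (auto simp: incvec_def)
    next
      case False
      then obtain z where z: "x = Some z" "z \<noteq> 0" by (cases x) auto
      then show ?thesis using W_gen[OF z(2), of B1] W_gen[OF z(2), of B2] c1 c2
        by (simp add: incvec_def)
    qed
    ultimately show "F y = (incvec {p} + incvec {q}) y" using y by simp
  qed
  ultimately show ?thesis by simp
qed

lemma u_inj: "inj (\<lambda>y. incvec {Some y} + incvec {None})"
proof (rule injI)
  fix x y assume "incvec {Some x} + incvec {None} = incvec {Some y} + incvec {None}"
  then have "(incvec {Some x} + incvec {None}) (Some x) = (incvec {Some y} + incvec {None}) (Some x)" by simp
  then show "x = y" by (simp add: incvec_def split: if_splits)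
qed

theorem theorem12:
  fixes Bs :: "'a::{field,finite} option set set" and m k :: nat
  assumes "card (UNIV :: 'a set) = 2 ^ m" and "m \<ge> 2"
    and "1 \<le> k" and "k \<le> 2 ^ m"
    and "Bs \<noteq> {}"
    and "\<forall>B\<in>Bs. card B = k"
    and "\<forall>\<pi>\<in>PGL2. \<forall>B\<in>Bs. \<pi> ` B \<in> Bs"
  shows "two_rank Bs = (if even k then 2 ^ m else 2 ^ m + 1)"
proof -
  define u where "u = (\<lambda>y::'a. incvec {Some y} + incvec {None})"
  define eN where "eN = (incvec {None} :: 'a option \<Rightarrow> bit)"
  define V where "V = incvec ` Bs"
  have ev: "even (card (UNIV :: 'a set))" using assms(1,2) by simp
  have kq: "k \<le> card (UNIV :: 'a set)" using assms(1,4) by simp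
  have S0sp: "range u \<subseteq> vs.span V"
    unfolding u_def V_def using pair[OF ev assms(5,6,3) kq assms(7)] by auto
  have ind1: "vs.independent (range u \<union> {eN})"
    unfolding u_def eN_def by (rule indep_S1)
  have ind0: "vs.independent (range u)"
    by (rule vs.independent_mono[OF ind1]) auto
  have neq: "eN \<notin> range u"
  proof
    assume "eN \<in> range u"
    then obtain y where "eN = u y" by auto
    then have "eN (Some y) = u y (Some y)" by simp
    then show False by (simp add: incvec_def u_def eN_def)
  qed
  have card0: "card (range u) = 2 ^ m"
    using card_image[OF u_inj[where 'a='a]] assms(1) unfolding u_def by simp
  define s where "s = (\<lambda>B::'a option set. \<Sum>p\<in>B - {None}. incvec {p} + incvec {None})"
  have s0: "s B \<in> vs.span (range u)" for B
    unfolding s_def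
  proof (rule vs.span_sum)
    fix p assume "p \<in> B - {None}"
    then obtain y where "p = Some y" by (cases p) auto
    then show "incvec {p} + incvec {None} \<in> vs.span (range u)"
      by (intro vs.span_base) (auto simp: u_def)
  qed
  have dec: "incvec B = s B + scaleF (of_nat k) eN" if "B \<in> Bs" for B
    using decomp[of B] assms(6) that unfolding s_def eN_def by simp
  show ?thesis
  proof (cases "even k")
    case True
    have "vs.span V = vs.span (range u)"
      unfolding vs.span_eq
    proof
      show "V \<subseteq> vs.span (range u)"
      proof
        fix v assume "v \<in> V"
        then obtain B where B: "B \<in> Bs" "v = incvec B" unfolding V_def by auto
        have z: "scaleF (of_nat k) eN = 0" using True by (simp add: of_nat_bit scaleF_def fun_eq_iff)
        have "v = s B" using dec[OF B(1)] B(2) z by (simp only: add_0_right)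
        then show "v \<in> vs.span (range u)" using s0 by simp
      qed
    qed (rule S0sp)
    then have "vs.dim V = card (range u)"
      using vs.span_eq_dim vs.dim_eq_card_independent[OF ind0] by metis
    then show ?thesis using True card0 unfolding two_rank_def V_def by simp
  next
    case False
    have ks: "scaleF (of_nat k) eN = eN" using False by (simp add: of_nat_bit scaleF_def fun_eq_iff)
    have "vs.span V = vs.span (range u \<union> {eN})"
      unfolding vs.span_eq
    proof
      show "V \<subseteq> vs.span (range u \<union> {eN})"
      proof
        fix v assume "v \<in> V"
        then obtain B where B: "B \<in> Bs" "v = incvec B" unfolding V_def by auto
        have "s B \<in> vs.span (range u \<union> {eN})"
          using s0 vs.span_mono[of "range u" "range u \<union> {eN}"] by auto
        moreover have "eN \<in> vs.span (range u \<union> {eN})" by (intro vs.span_base) simp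
        ultimately show "v \<in> vs.span (range u \<union> {eN})"
          using dec[OF B(1)] B(2) ks by (simp add: vs.span_add)
      qed
    next
      obtain B where B: "B \<in> Bs" using assms(5) by auto
      have "eN = incvec B + s B"
        using dec[OF B] ks fun_add_cancel[of "s B" eN] by simp
      moreover have "incvec B \<in> vs.span V" using B unfolding V_def by (intro vs.span_base) simp
      moreover have "s B \<in> vs.span V" using s0[of B] vs.span_mono[OF S0sp] by (auto simp: vs.span_span)
      ultimately have "eN \<in> vs.span V" by (simp add: vs.span_add)
      then show "range u \<union> {eN} \<subseteq> vs.span V" using S0sp by auto
    qed
    then have "vs.dim V = card (range u \<union> {eN})"
      using vs.span_eq_dim vs.dim_eq_card_independent[OF ind1] by metis
    also have "\<dots> = 2 ^ m + 1" using neq card0 by simp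
    finally show ?thesis using False unfolding two_rank_def V_def by simp
  qed
qed
end
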